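(* Let $G=(V,E)$ be a computation graph with $n=|V|$ vertices and fast-memory size $M$. Let $J^*_G$ be the minimum number of non-trivial I/Os over all valid evaluations of $G$. Let $\lambda_1(\tilde L)\le\lambda_2(\tilde L)\le\dots\le\lambda_n(\tilde L)$ be the eigenvalues of $\tilde L$ in increasing order. Then for every integer $k$ with $1\le k\le n$, $$J^*_G \;\geq\; \left\lfloor \frac{n}{k}\right\rfloor \sum_{i=1}^k \lambda_i(\tilde L) \;-\; 2kM.$$
   Context: A computation graph is a finite directed acyclic graph $G=(V,E)$. Each vertex is an operation producing a single element, and an edge $(u,v)$ means the result of $u$ is an operand of $v$. Sources are the inputs and sinks are the outputs. Execution model: a single processor has a fast memory holding at most $M$ elements and an unbounded slow memory. Every vertex is evaluated exactly once (no recomputation), in an order that is topological with respect to $G$. To evaluate $v$, all parents of $v$ must be in fast memory; a parent not present must be read from slow memory. The eviction policy is unconstrained, but a value that is evicted while still needed by a later vertex must first be written to slow memory. Only non-trivial I/O is counted. Inputs can be placed directly into fast memory at no cost, and outputs are reported immediately at no cost when computed. However, an input that is evicted while still needed must be written to slow memory. Each transfer of one element between fast and slow memory counts as one I/O. $\tilde L=\tilde D-\tilde A$ is the Laplacian of the weighted undirected graph $\tilde G$ on $V$. For each directed edge $(u,v)\in E$, $\tilde G$ contains the undirected edge $\{u,v\}$ with weight $1/d_{out}(u)$, where $d_{out}$ is out-degree in $G$. $\tilde A$ is its weighted adjacency matrix and $\tilde D$ its diagonal weighted-degree matrix. *)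

theory Defs
  imports "Jordan_Normal_Form.Char_Poly" "HOL-Library.Multiset" "HOL-Library.Extended_Real"
begin

text \<open>Computation graph: vertex set {0..<n}, directed edges E (acyclic, within the vertex set).\<close>

definition dout :: "nat rel \<Rightarrow> nat \<Rightarrow> nat" where
  "dout E u = card {v. (u, v) \<in> E}"

definition wadj :: "nat rel \<Rightarrow> nat \<Rightarrow> nat \<Rightarrow> real" where
  "wadj E u v = (if (u, v) \<in> E then 1 / real (dout E u) else 0)
              + (if (v, u) \<in> E then 1 / real (dout E v) else 0)"

definition wdeg :: "nat \<Rightarrow> nat rel \<Rightarrow> nat \<Rightarrow> real" where
  "wdeg n E u = (\<Sum>v<n. wadj E u v)"

definition laplacian :: "nat \<Rightarrow> nat rel \<Rightarrow> real mat" where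
  "laplacian n E = mat n n (\<lambda>(i, j). (if i = j then wdeg n E i else 0) - wadj E i j)"

definition sorted_eigenvalues :: "real mat \<Rightarrow> real list" where
  "sorted_eigenvalues A = sorted_list_of_multiset (proots (char_poly A))"

text \<open>Execution model. State = (fast memory R, slow memory B, already computed C).\<close>
datatype move = Load nat | Store nat | Evict nat | Compute nat

type_synonym state = "nat set \<times> nat set \<times> nat set"

fun step :: "nat \<Rightarrow> nat rel \<Rightarrow> nat \<Rightarrow> move \<Rightarrow> state \<Rightarrow> state option" where
  "step n E M (Load v) (R, B, C) =
     (if v \<in> B \<and> card (insert v R) \<le> M then Some (insert v R, B, C) else None)"
| "step n E M (Store v) (R, B, C) =
     (if v \<in> R then Some (R, insert v B, C) else None)"
| "step n E M (Evict v) (R, B, C) =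
     (if v \<in> R then Some (R - {v}, B, C) else None)"
| "step n E M (Compute v) (R, B, C) =
     (if v < n \<and> v \<notin> C \<and> (\<forall>u. (u, v) \<in> E \<longrightarrow> u \<in> R) \<and> card (insert v R) \<le> M
      then Some (insert v R, B, insert v C) else None)"

fun run :: "nat \<Rightarrow> nat rel \<Rightarrow> nat \<Rightarrow> move list \<Rightarrow> state \<Rightarrow> state option" where
  "run n E M [] s = Some s"
| "run n E M (m # ms) s = (case step n E M m s of None \<Rightarrow> None | Some s' \<Rightarrow> run n E M ms s')"

definition valid_evaluation :: "nat \<Rightarrow> nat rel \<Rightarrow> nat \<Rightarrow> move list \<Rightarrow> bool" where
  "valid_evaluation n E M ms =
     (\<exists>R B. run n E M ms ({}, {}, {}) = Some (R, B, {0..<n}))"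

fun is_io :: "move \<Rightarrow> bool" where
  "is_io (Load _) = True"
| "is_io (Store _) = True"
| "is_io (Evict _) = False"
| "is_io (Compute _) = False"

definition io_cost :: "move list \<Rightarrow> nat" where
  "io_cost ms = length (filter is_io ms)"

text \<open>Minimum number of non-trivial I/Os (infinity if no valid evaluation exists).\<close>
definition J_star :: "nat \<Rightarrow> nat rel \<Rightarrow> nat \<Rightarrow> ereal" where
  "J_star n E M = (INF ms \<in> {ms. valid_evaluation n E M ms}. ereal (real (io_cost ms)))"

end

theory Submission
  imports Defs "Jordan_Normal_Form.Schur_Decomposition"
begin


lemma real_cscalar: fixes v w :: "real vec" shows "v \<bullet>c w = v \<bullet> w"
  by simp

definition diagm :: "nat \<Rightarrow> real list \<Rightarrow> real mat" where
  "diagm n es = mat n n (\<lambda>(i,j). if i = j then es ! i else 0)"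

lemma spectral_aux:
  fixes es :: "real list"
  shows "\<And>n A. A \<in> carrier_mat n n \<Longrightarrow> transpose_mat A = A \<Longrightarrow> char_poly A = (\<Prod>e\<leftarrow>es. [:-e,1:]) \<Longrightarrow>
   \<exists>P. P \<in> carrier_mat n n \<and> transpose_mat P * P = 1\<^sub>m n \<and> A * P = P * diagm n es"
proof (induction es)
  case Nil
  from degree_monic_char_poly[OF Nil(1)] Nil(3) have n: "n = 0" by simp
  show ?case
    by (rule exI[of _ "1\<^sub>m n"], insert Nil(1) n, auto intro!: eq_matI simp: diagm_def)
next
  case (Cons e es n A)
  note A = Cons(2)
  have cp: "char_poly A = [: -e, 1 :] * (\<Prod>e \<leftarrow> es. [:- e, 1:])" using Cons(4) by auto
  have mon: "monic (\<Prod>e\<leftarrow> es. [:- e, 1:])" by (rule monic_prod_list, auto)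
  have deg: "degree (char_poly A) = Suc (degree (\<Prod>e\<leftarrow> es. [:- e, 1:]))" unfolding cp
    by (subst degree_mult_eq, insert mon, auto)
  with degree_monic_char_poly[OF A] obtain n' where nn: "n = Suc n'" by (cases n, auto)
  have e: "eigenvalue A e" 
    unfolding eigenvalue_root_char_poly[OF A] cp by simp
  define v where "v = find_eigenvector A e"
  from find_eigenvector[OF A e] have ev: "eigenvector A v e" unfolding v_def .
  from this[unfolded eigenvector_def]
  have v: "v \<in> carrier_vec n" and v0: "v \<noteq> 0\<^sub>v n" and Av: "A *\<^sub>v v = e \<cdot>\<^sub>v v" using A by auto
  interpret cof_vec_space n "TYPE(real)" .
  define b where "b = basis_completion v"
  from basis_completion[OF v v0, folded b_def]
  have dist_b: "distinct b" 
    and indep: "\<not> lin_dep (set b)" and b: "set b \<subseteq> carrier_vec n" and hdb: "hd b = v" 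
    and len_b: "length b = n" by auto
  from hdb len_b nn obtain vs where bv: "b = v # vs" by (cases b, auto)
  define ws where "ws = gram_schmidt n b"
  from gram_schmidt_result[OF b dist_b indep refl, folded ws_def]
  have ws: "set ws \<subseteq> carrier_vec n" "corthogonal ws" "length ws = n" 
    by (auto simp: len_b)
  from gram_schmidt_hd[OF v, of vs, folded bv] have hdws: "hd ws = v" unfolding ws_def .
  have ws0: "ws ! 0 = v" using hdws ws(3) nn by (cases ws, auto)
  have wsc: "\<And>i. i < n \<Longrightarrow> ws ! i \<in> carrier_vec n" using ws by auto
  have wsorth: "\<And>i j. i < n \<Longrightarrow> j < n \<Longrightarrow> (ws ! i \<bullet> ws ! j = 0) = (i \<noteq> j)"
    using ws(2,3) unfolding corthogonal_def by (auto simp: real_cscalar)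
  have wspos: "\<And>i. i < n \<Longrightarrow> ws ! i \<bullet> ws ! i > 0"
  proof -
    fix i assume i: "i < n"
    have "0 < ws ! i \<bullet>c ws ! i" using wsorth[OF i i] conjugate_square_greater_0_vec[OF wsc[OF i]]
      by (auto simp: real_cscalar)
    thus "ws ! i \<bullet> ws ! i > 0" by (simp add: real_cscalar)
  qed
  define us where "us = map (\<lambda>w. (1 / sqrt (w \<bullet> w)) \<cdot>\<^sub>v w) ws"
  have lus: "length us = n" using ws by (simp add: us_def)
  have usc: "\<And>i. i < n \<Longrightarrow> us ! i \<in> carrier_vec n" using wsc ws(3) by (simp add: us_def)
  have usorth: "\<And>i j. i < n \<Longrightarrow> j < n \<Longrightarrow> us ! i \<bullet> us ! j = (if i = j then 1 else 0)"
  proof -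
    fix i j assume i: "i < n" and j: "j < n"
    have "us ! i \<bullet> us ! j = (1 / sqrt (ws ! i \<bullet> ws ! i)) * (1 / sqrt (ws ! j \<bullet> ws ! j)) * (ws ! i \<bullet> ws ! j)"
      using i j ws(3) wsc[OF i] wsc[OF j] by (simp add: us_def)
    also have "\<dots> = (if i = j then 1 else 0)"
      using wsorth[OF i j] wspos[OF i] wspos[OF j]
      by (cases "i = j") (auto simp: real_sqrt_mult[symmetric])
    finally show "us ! i \<bullet> us ! j = (if i = j then 1 else 0)" .
  qed
  have us0': "us ! 0 = (1 / sqrt (v \<bullet> v)) \<cdot>\<^sub>v v" using ws0 ws(3) nn by (simp add: us_def)
  have us0: "A *\<^sub>v us ! 0 = e \<cdot>\<^sub>v us ! 0"
    unfolding us0' mult_mat_vec[OF A v] Av smult_smult_assoc by (simp add: mult.commute)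
  define W where "W = mat_of_cols n us"
  have W: "W \<in> carrier_mat n n" unfolding W_def using mat_of_cols_carrier(1)[of n us] lus by simp
  have colW: "\<And>i. i < n \<Longrightarrow> col W i = us ! i" unfolding W_def using usc lus by (simp add: col_mat_of_cols)
  have WtW: "transpose_mat W * W = 1\<^sub>m n"
    by (rule eq_matI, insert W, auto simp: colW usorth)
  have WWt: "W * transpose_mat W = 1\<^sub>m n"
    using mat_mult_left_right_inverse[OF _ W WtW] W by auto
  define A' where "A' = transpose_mat W * A * W"
  have A'c: "A' \<in> carrier_mat n n" unfolding A'_def using W A by auto
  have A'col: "\<And>i. i < n \<Longrightarrow> A' $$ (i,0) = (if i = 0 then e else 0)"
  proof -
    fix i assume i: "i < n"
    have "A' = transpose_mat W * (A * W)" unfolding A'_def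
      by (rule assoc_mult_mat[OF _ A W], insert W, auto)
    hence "A' $$ (i,0) = row (transpose_mat W) i \<bullet> col (A * W) 0"
      using i W A nn by (simp add: index_mult_mat)
    also have "\<dots> = us ! i \<bullet> (e \<cdot>\<^sub>v us ! 0)"
    proof -
      have r: "row (transpose_mat W) i = us ! i" using i W by (simp add: row_transpose colW)
      have c1: "col (A * W) 0 = A *\<^sub>v col W 0" using nn by (intro col_mult2[OF A W]) simp
      have c2: "col W 0 = us ! 0" using nn by (intro colW) simp
      show ?thesis unfolding r c1 c2 us0 ..
    qed
    also have "\<dots> = e * (us ! i \<bullet> us ! 0)"
      using usc[OF i] usc[of 0] nn by simp
    finally show "A' $$ (i,0) = (if i = 0 then e else 0)" using usorth[OF i, of 0] nn by simp
  qed
  have A'sym: "transpose_mat A' = A'"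
  proof -
    have "transpose_mat A' = transpose_mat W * transpose_mat A * transpose_mat (transpose_mat W)"
      unfolding A'_def using W A
      by (simp add: transpose_mult[of _ n n _ n] assoc_mult_mat[of _ n n _ n _ n])
    thus ?thesis using Cons(3) unfolding A'_def by simp
  qed
  have A'row: "\<And>j. j < n \<Longrightarrow> A' $$ (0,j) = (if j = 0 then e else 0)"
  proof -
    fix j assume j: "j < n"
    have "A' $$ (0,j) = transpose_mat A' $$ (j, 0)" using j A'c nn by simp
    thus "A' $$ (0,j) = (if j = 0 then e else 0)" using A'sym A'col[OF j] by simp
  qed
  define A1 where "A1 = mat 1 1 (\<lambda>_. e)"
  define A3 where "A3 = mat n' n' (\<lambda>(i,j). A' $$ (Suc i, Suc j))"
  have A1c: "A1 \<in> carrier_mat 1 1" unfolding A1_def by simp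
  have A3c: "A3 \<in> carrier_mat n' n'" unfolding A3_def by simp
  have A'block: "A' = four_block_mat A1 (0\<^sub>m 1 n') (0\<^sub>m n' 1) A3"
  proof (rule eq_matI)
    fix i j assume i: "i < dim_row (four_block_mat A1 (0\<^sub>m 1 n') (0\<^sub>m n' 1) A3)"
      and j: "j < dim_col (four_block_mat A1 (0\<^sub>m 1 n') (0\<^sub>m n' 1) A3)"
    show "A' $$ (i, j) = four_block_mat A1 (0\<^sub>m 1 n') (0\<^sub>m n' 1) A3 $$ (i, j)"
      using i j A'col[of i] A'row[of j] nn A1c A3c
      by (cases i; cases j) (auto simp: A1_def A3_def)
  qed (insert A'c nn A1c A3c, auto)
  have sim: "similar_mat A' A"
    by (rule similar_matI[where P = "transpose_mat W" and Q = W and n = n], insert A'c A W WtW WWt, auto simp: A'_def)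
  have "char_poly A' = char_poly A1 * char_poly A3"
    unfolding A'block by (rule char_poly_four_block_zeros_col[OF A1c _ A3c], auto)
  also have "char_poly A1 = [: -e,1 :]"
    by (simp add: A1_def char_poly_defs det_def sign_def)
  finally have "[:- e, 1:] * char_poly A3 = [:- e, 1:] * (\<Prod>e\<leftarrow>es. [:- e, 1:])"
    using char_poly_similar[OF sim] cp by simp
  hence cp3: "char_poly A3 = (\<Prod>e\<leftarrow>es. [:- e, 1:])"
    by (metis mult_cancel_left pCons_eq_0_iff zero_neq_one)
  have A3sym: "transpose_mat A3 = A3"
  proof (rule eq_matI)
    fix i j assume "i < dim_row A3" "j < dim_col A3"
    hence i: "i < n'" and j: "j < n'" using A3c by auto
    have "A' $$ (Suc j, Suc i) = transpose_mat A' $$ (Suc i, Suc j)" using i j A'c nn by simp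
    thus "transpose_mat A3 $$ (i, j) = A3 $$ (i, j)" using i j A'sym by (simp add: A3_def)
  qed (insert A3c, auto)
  from Cons(1)[OF A3c A3sym cp3] obtain P3 where P3: "P3 \<in> carrier_mat n' n'"
    and P3o: "transpose_mat P3 * P3 = 1\<^sub>m n'" and AP3: "A3 * P3 = P3 * diagm n' es" by auto
  define Pb where "Pb = four_block_mat (1\<^sub>m 1) (0\<^sub>m 1 n') (0\<^sub>m n' 1) P3"
  have Pbc: "Pb \<in> carrier_mat n n" unfolding Pb_def using P3 nn by auto
  have PbT: "transpose_mat Pb = four_block_mat (1\<^sub>m 1) (0\<^sub>m 1 n') (0\<^sub>m n' 1) (transpose_mat P3)"
    unfolding Pb_def by (subst transpose_four_block_mat, insert P3, auto)
  have PbtPb: "transpose_mat Pb * Pb = 1\<^sub>m n"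
    unfolding PbT unfolding Pb_def
    by (subst mult_four_block_mat, insert P3 P3o nn, auto)
  define D3 where "D3 = diagm n' es"
  have D3c: "D3 \<in> carrier_mat n' n'" unfolding D3_def diagm_def by auto
  have D: "diagm n (e # es) = four_block_mat A1 (0\<^sub>m 1 n') (0\<^sub>m n' 1) D3"
    by (rule eq_matI, insert nn, auto simp: diagm_def D3_def A1_def)
  have A'Pb: "A' * Pb = four_block_mat A1 (0\<^sub>m 1 n') (0\<^sub>m n' 1) (A3 * P3)"
    unfolding A'block Pb_def
    by (subst mult_four_block_mat, insert P3 A1c A3c, auto)
  have PbD: "Pb * diagm n (e # es) = four_block_mat A1 (0\<^sub>m 1 n') (0\<^sub>m n' 1) (P3 * D3)"
    unfolding D Pb_def
    by (subst mult_four_block_mat, insert P3 A1c D3c, auto)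
  have A'PbD: "A' * Pb = Pb * diagm n (e # es)" unfolding A'Pb PbD AP3 D3_def ..
  have AW: "A * W = W * A'"
  proof -
    have "W * A' = (W * transpose_mat W) * A * W" unfolding A'_def using W A
      by (simp add: assoc_mult_mat[of _ n n _ n _ n])
    thus ?thesis using WWt A W by simp
  qed
  have Dc: "diagm n (e # es) \<in> carrier_mat n n" unfolding diagm_def by auto
  show ?case
  proof (intro exI conjI)
    show "W * Pb \<in> carrier_mat n n" using W Pbc by auto
    have "transpose_mat (W * Pb) * (W * Pb) = transpose_mat Pb * (transpose_mat W * W) * Pb"
      using W Pbc by (simp add: transpose_mult[OF W Pbc] assoc_mult_mat[of _ n n _ n _ n])
    thus "transpose_mat (W * Pb) * (W * Pb) = 1\<^sub>m n" using WtW PbtPb Pbc by simp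
    have "A * (W * Pb) = (A * W) * Pb" using A W Pbc by (simp add: assoc_mult_mat[of _ n n _ n _ n])
    also have "\<dots> = W * (A' * Pb)" unfolding AW using W A'c Pbc by (simp add: assoc_mult_mat[of _ n n _ n _ n])
    also have "\<dots> = (W * Pb) * diagm n (e # es)" unfolding A'PbD using W Pbc Dc
      by (simp add: assoc_mult_mat[of _ n n _ n _ n])
    finally show "A * (W * Pb) = (W * Pb) * diagm n (e # es)" .
  qed
qed
lemma sym_real_eigenvalue:
  fixes A :: "real mat" and a :: complex
  assumes A: "A \<in> carrier_mat n n" and sym: "transpose_mat A = A"
    and ev: "eigenvalue (map_mat complex_of_real A) a"
  shows "a = of_real (Re a)"
proof -
  let ?Ac = "map_mat complex_of_real A"
  have Ac: "?Ac \<in> carrier_mat n n" using A by simp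
  from ev obtain v where v: "v \<in> carrier_vec n" and v0: "v \<noteq> 0\<^sub>v n" and Av: "?Ac *\<^sub>v v = a \<cdot>\<^sub>v v"
    unfolding eigenvalue_def eigenvector_def using A by auto
  have Sym: "\<And>i j. i < n \<Longrightarrow> j < n \<Longrightarrow> A $$ (i,j) = A $$ (j,i)"
  proof -
    fix i j assume "i < n" "j < n"
    hence "transpose_mat A $$ (j,i) = A $$ (i,j)" using A by simp
    thus "A $$ (i,j) = A $$ (j,i)" using sym by simp
  qed
  have row: "\<And>i. i < n \<Longrightarrow> (\<Sum>j<n. of_real (A $$ (i,j)) * v $ j) = a * v $ i"
  proof -
    fix i assume i: "i < n"
    have "(?Ac *\<^sub>v v) $ i = a * v $ i" using Av i v by simp
    moreover have "(?Ac *\<^sub>v v) $ i = (\<Sum>j<n. of_real (A $$ (i,j)) * v $ j)"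
      using i A v by (simp add: scalar_prod_def lessThan_atLeast0)
    ultimately show "(\<Sum>j<n. of_real (A $$ (i,j)) * v $ j) = a * v $ i" by simp
  qed
  define s where "s = (\<Sum>i<n. cnj (v $ i) * (\<Sum>j<n. of_real (A $$ (i,j)) * v $ j))"
  define N where "N = (\<Sum>i<n. cnj (v $ i) * v $ i)"
  have sN: "s = a * N" unfolding s_def N_def using row by (simp add: sum_distrib_left algebra_simps)
  have "cnj s = (\<Sum>i<n. v $ i * (\<Sum>j<n. of_real (A $$ (i,j)) * cnj (v $ j)))"
    unfolding s_def by simp
  also have "\<dots> = (\<Sum>i<n. \<Sum>j<n. v $ i * of_real (A $$ (i,j)) * cnj (v $ j))"
    by (simp add: sum_distrib_left mult.assoc)
  also have "\<dots> = (\<Sum>j<n. \<Sum>i<n. v $ i * of_real (A $$ (i,j)) * cnj (v $ j))"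
    by (rule sum.swap)
  also have "\<dots> = (\<Sum>j<n. cnj (v $ j) * (\<Sum>i<n. of_real (A $$ (j,i)) * v $ i))"
    by (auto simp: sum_distrib_left Sym intro!: sum.cong)
  also have "\<dots> = s" unfolding s_def ..
  finally have cs: "cnj s = s" .
  have NR: "N = of_real (\<Sum>i<n. (cmod (v $ i))^2)"
    unfolding N_def of_real_sum by (rule sum.cong, simp, metis complex_norm_square mult.commute)
  have "\<exists>i<n. v $ i \<noteq> 0" using v v0 by (auto simp: vec_eq_iff)
  then obtain i where i: "i < n" "v $ i \<noteq> 0" by auto
  have "(\<Sum>i<n. (cmod (v $ i))^2) > 0"
    by (rule sum_pos2[of _ i], insert i, auto)
  hence N0: "N \<noteq> 0" unfolding NR by (simp only: of_real_eq_0_iff)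
  have cN: "cnj N = N" unfolding NR by (rule complex_cnj_complex_of_real)
  have "cnj a * cnj N = a * N" using cs sN by (metis complex_cnj_mult)
  hence "cnj a * N = a * N" unfolding cN .
  hence ca: "cnj a = a" using N0 by (rule mult_right_cancel[THEN iffD1, rotated])
  have "Im a = 0" using arg_cong[OF ca, of Im] by simp
  thus ?thesis by (simp add: complex_eq_iff)
qed

lemma sym_split:
  fixes A :: "real mat"
  assumes A: "A \<in> carrier_mat n n" and sym: "transpose_mat A = A"
  shows "\<exists>es. char_poly A = (\<Prod>e\<leftarrow>es. [:-e,1:])"
proof -
  let ?Ac = "map_mat complex_of_real A"
  have Ac: "?Ac \<in> carrier_mat n n" using A by simp
  from char_poly_factorized[OF Ac] obtain as where cA: "char_poly ?Ac = (\<Prod>a\<leftarrow>as. [:- a, 1:])" by auto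
  have re: "\<And>a. a \<in> set as \<Longrightarrow> a = of_real (Re a)"
  proof -
    fix a assume "a \<in> set as"
    hence "poly (char_poly ?Ac) a = 0" unfolding cA by (rule linear_poly_root)
    hence "eigenvalue ?Ac a" using eigenvalue_root_char_poly[OF Ac] by simp
    thus "a = of_real (Re a)" by (rule sym_real_eigenvalue[OF A sym])
  qed
  interpret rp: map_poly_inj_comm_ring_hom "of_real :: real \<Rightarrow> complex" ..
  have "map_poly of_real (char_poly A) = (\<Prod>a\<leftarrow>as. [:- a, 1:])"
    using cA of_real_hom.char_poly_hom[OF A] by metis
  also have "\<dots> = (\<Prod>r\<leftarrow>map Re as. map_poly of_real [:- r, 1:])"
    unfolding map_map o_def
    by (rule arg_cong[where f = prod_list], rule map_cong, insert re, auto)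
  also have "\<dots> = map_poly of_real (\<Prod>r\<leftarrow>map Re as. [:- r, 1:])"
    by (simp add: rp.hom_prod_list map_map o_def)
  finally have "char_poly A = (\<Prod>r\<leftarrow>map Re as. [:- r, 1:])" by simp
  thus ?thesis by blast
qed

lemma proots_linprod: "proots (\<Prod>r\<leftarrow>rs. [:-r,1:]) = mset (rs :: real list)"
proof (induction rs)
  case (Cons r rs)
  have nz: "(\<Prod>r\<leftarrow>rs. [:-r,1:]) \<noteq> (0 :: real poly)"
    using monic_prod_list[of "map (\<lambda>r. [:-r,1:]) rs"] by (auto simp: o_def)
  have "proots (\<Prod>r\<leftarrow>r#rs. [:-r,1:]) = proots [:-r,1:] + proots (\<Prod>r\<leftarrow>rs. [:-r,1:])"
    unfolding list.map prod_list.Cons by (rule proots_mult, simp, rule nz)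
  thus ?case using Cons by simp
qed simp

lemma sym_decomp:
  fixes A :: "real mat"
  assumes A: "A \<in> carrier_mat n n" and sym: "transpose_mat A = A"
  defines "es \<equiv> sorted_list_of_multiset (proots (char_poly A))"
  shows "length es = n \<and> sorted es \<and> (\<exists>p. (\<forall>i<n. \<forall>j<n. (\<Sum>v<n. p v i * p v j) = (if i = j then 1 else 0))
     \<and> (\<forall>u<n. \<forall>v<n. (\<Sum>i<n. p u i * p v i) = (if u = v then 1 else 0))
     \<and> (\<forall>u<n. \<forall>v<n. A $$ (u,v) = (\<Sum>i<n. p u i * es ! i * p v i)))"
proof -
  from sym_split[OF A sym] obtain rs where cp: "char_poly A = (\<Prod>e\<leftarrow>rs. [:-e,1:])" by auto
  have es: "es = sort rs" unfolding es_def cp proots_linprod by (simp add: sorted_list_of_multiset_mset)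
  have len: "length rs = n" using degree_monic_char_poly[OF A] unfolding cp
    using degree_linear_factors[of uminus rs] by simp
  have "(\<Prod>e\<leftarrow>sort rs. [:-e,1:]) = prod_mset (mset (map (\<lambda>e. [:-e,1:]) (sort rs)))"
    by (rule prod_mset_prod_list[symmetric])
  also have "mset (map (\<lambda>e. [:-e,1:]) (sort rs)) = mset (map (\<lambda>e. [:-e,1:]) rs)" by simp
  also have "prod_mset \<dots> = (\<Prod>e\<leftarrow>rs. [:-e,1:])" by (rule prod_mset_prod_list)
  finally have cp2: "char_poly A = (\<Prod>e\<leftarrow>es. [:-e,1:])" unfolding cp es by simp
  from spectral_aux[OF A sym cp2] obtain P where P: "P \<in> carrier_mat n n"
    and PtP: "transpose_mat P * P = 1\<^sub>m n" and AP: "A * P = P * diagm n es" by auto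
  have PPt: "P * transpose_mat P = 1\<^sub>m n"
    using mat_mult_left_right_inverse[OF _ P PtP] P by auto
  have D: "diagm n es \<in> carrier_mat n n" unfolding diagm_def by simp
  have AA: "A = P * diagm n es * transpose_mat P"
  proof -
    have "A = A * (P * transpose_mat P)" using A PPt by simp
    also have "\<dots> = (A * P) * transpose_mat P" using A P by (simp add: assoc_mult_mat[of _ n n _ n _ n])
    finally show ?thesis unfolding AP .
  qed
  have PD: "\<And>u i. u < n \<Longrightarrow> i < n \<Longrightarrow> (P * diagm n es) $$ (u,i) = P $$ (u,i) * es ! i"
  proof -
    fix u i assume u: "u < n" and i: "i < n"
    have "(P * diagm n es) $$ (u,i) = (\<Sum>j\<in>{0..<n}. P $$ (u,j) * (if j = i then es ! j else 0))"
      using u i P by (simp add: diagm_def scalar_prod_def)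
    also have "\<dots> = (\<Sum>j\<in>{0..<n}. (if j = i then P $$ (u,i) * es ! i else 0))"
      by (rule sum.cong, auto)
    also have "\<dots> = P $$ (u,i) * es ! i" using i by simp
    finally show "(P * diagm n es) $$ (u,i) = P $$ (u,i) * es ! i" .
  qed
  show ?thesis
  proof (intro conjI exI[of _ "\<lambda>u i. P $$ (u,i)"] allI impI)
    show "length es = n" using es len by simp
    show "sorted es" using es by simp
    fix i j assume i: "i < n" and j: "j < n"
    have "(transpose_mat P * P) $$ (i,j) = (\<Sum>v<n. P $$ (v,i) * P $$ (v,j))"
      using i j P by (simp add: scalar_prod_def lessThan_atLeast0)
    thus "(\<Sum>v<n. P $$ (v,i) * P $$ (v,j)) = (if i = j then 1 else 0)" using PtP i j by simp
  next
    fix u v assume u: "u < n" and v: "v < n"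
    have "(P * transpose_mat P) $$ (u,v) = (\<Sum>i<n. P $$ (u,i) * P $$ (v,i))"
      using u v P by (simp add: scalar_prod_def lessThan_atLeast0)
    thus "(\<Sum>i<n. P $$ (u,i) * P $$ (v,i)) = (if u = v then 1 else 0)" using PPt u v by simp
  next
    fix u v assume u: "u < n" and v: "v < n"
    define Q where "Q = P * diagm n es"
    have Qc: "Q \<in> carrier_mat n n" unfolding Q_def using P D by simp
    have AQ: "A = Q * transpose_mat P" unfolding Q_def by (rule AA)
    have "A $$ (u,v) = (\<Sum>i\<in>{0..<n}. Q $$ (u,i) * P $$ (v,i))"
      using u v P Qc unfolding AQ by (simp add: scalar_prod_def)
    also have "\<dots> = (\<Sum>i<n. P $$ (u,i) * es ! i * P $$ (v,i))"
      unfolding Q_def by (auto simp: PD u lessThan_atLeast0 intro!: sum.cong)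
    finally show "A $$ (u,v) = (\<Sum>i<n. P $$ (u,i) * es ! i * P $$ (v,i))" .
  qed
qed



lemma cauchy_sum:
  fixes a :: "nat \<Rightarrow> real"
  assumes "finite S"
  shows "(\<Sum>u\<in>S. a u)^2 \<le> real (card S) * (\<Sum>u\<in>S. (a u)^2)"
proof -
  have "0 \<le> (\<Sum>u\<in>S. \<Sum>v\<in>S. (a u - a v)^2)" by (intro sum_nonneg) auto
  also have "(\<Sum>u\<in>S. \<Sum>v\<in>S. (a u - a v)^2) = (\<Sum>u\<in>S. \<Sum>v\<in>S. (a u)^2 + (a v)^2 - 2 * (a u * a v))"
    by (intro sum.cong refl) (simp add: power2_diff)
  also have "\<dots> = 2 * (real (card S) * (\<Sum>u\<in>S. (a u)^2)) - 2 * (\<Sum>u\<in>S. a u)^2"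
    by (simp add: sum.distrib sum_subtractf sum_distrib_left[symmetric] sum_distrib_right[symmetric]
        power2_eq_square algebra_simps) (simp add: sum_distrib_left mult_ac)
  finally show ?thesis by simp
qed

lemma rearrange:
  fixes lam c :: "nat \<Rightarrow> real"
  assumes sorted: "\<And>i j. i \<le> j \<Longrightarrow> j < n \<Longrightarrow> lam i \<le> lam j"
    and c0: "\<And>i. i < n \<Longrightarrow> 0 \<le> c i" and c1: "\<And>i. i < n \<Longrightarrow> c i \<le> 1"
    and cs: "(\<Sum>i<n. c i) = real k" and k: "1 \<le> k" "k \<le> n"
  shows "(\<Sum>i<k. lam i) \<le> (\<Sum>i<n. lam i * c i)"
proof -
  let ?l = "lam (k - 1)"
  have split: "\<And>f :: nat \<Rightarrow> real. (\<Sum>i<n. f i) = (\<Sum>i<k. f i) + (\<Sum>i\<in>{k..<n}. f i)"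
  proof -
    fix f :: "nat \<Rightarrow> real"
    have "{..<n} = {..<k} \<union> {k..<n}" using k by auto
    hence "(\<Sum>i<n. f i) = (\<Sum>i\<in>{..<k} \<union> {k..<n}. f i)" by simp
    also have "\<dots> = (\<Sum>i<k. f i) + (\<Sum>i\<in>{k..<n}. f i)" by (rule sum.union_disjoint) auto
    finally show "(\<Sum>i<n. f i) = (\<Sum>i<k. f i) + (\<Sum>i\<in>{k..<n}. f i)" .
  qed
  have "(\<Sum>i<n. lam i * c i) - (\<Sum>i<k. lam i) = (\<Sum>i<k. lam i * (c i - 1)) + (\<Sum>i\<in>{k..<n}. lam i * c i)"
    using split[of "\<lambda>i. lam i * c i"] by (simp add: algebra_simps sum_subtractf)
  also have "\<dots> \<ge> (\<Sum>i<k. ?l * (c i - 1)) + (\<Sum>i\<in>{k..<n}. ?l * c i)"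
  proof (rule add_mono)
    show "(\<Sum>i<k. ?l * (c i - 1)) \<le> (\<Sum>i<k. lam i * (c i - 1))"
    proof (rule sum_mono)
      fix i assume "i \<in> {..<k}"
      hence i: "i < k" by simp
      have "lam i \<le> ?l" using sorted[of i "k-1"] i k by auto
      moreover have "c i - 1 \<le> 0" using c1[of i] i k by auto
      ultimately show "?l * (c i - 1) \<le> lam i * (c i - 1)" by (simp add: mult_right_mono_neg)
    qed
    show "(\<Sum>i\<in>{k..<n}. ?l * c i) \<le> (\<Sum>i\<in>{k..<n}. lam i * c i)"
    proof (rule sum_mono)
      fix i assume "i \<in> {k..<n}"
      hence i: "k \<le> i" "i < n" by auto
      have "?l \<le> lam i" using sorted[of "k-1" i] i k by auto
      thus "?l * c i \<le> lam i * c i" using c0[of i] i by (simp add: mult_right_mono)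
    qed
  qed
  also have "(\<Sum>i<k. ?l * (c i - 1)) + (\<Sum>i\<in>{k..<n}. ?l * c i) = ?l * ((\<Sum>i<n. c i) - real k)"
    using split[of c] by (simp add: sum_distrib_left[symmetric] sum_subtractf algebra_simps)
      (simp add: sum_distrib_right)
  also have "\<dots> = 0" using cs by simp
  finally show ?thesis by simp
qed

lemma kyfan_partition:
  fixes lam :: "nat \<Rightarrow> real" and p :: "nat \<Rightarrow> nat \<Rightarrow> real" and S :: "nat \<Rightarrow> nat set"
  assumes sorted: "\<And>i j. i \<le> j \<Longrightarrow> j < n \<Longrightarrow> lam i \<le> lam j"
    and orth1: "\<forall>i<n. \<forall>j<n. (\<Sum>v<n. p v i * p v j) = (if i = j then 1 else 0)"
    and orth2: "\<forall>u<n. \<forall>v<n. (\<Sum>i<n. p u i * p v i) = (if u = v then 1 else 0)"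
    and sub: "\<And>j. j < k \<Longrightarrow> S j \<subseteq> {..<n}"
    and disj: "\<And>j j'. j < k \<Longrightarrow> j' < k \<Longrightarrow> j \<noteq> j' \<Longrightarrow> S j \<inter> S j' = {}"
    and cover: "(\<Union>j<k. S j) = {..<n}"
    and card: "\<And>j. j < k \<Longrightarrow> m \<le> card (S j)" and m: "1 \<le> m" and k: "1 \<le> k" "k \<le> n"
    and Qnn: "\<And>j. j < k \<Longrightarrow> 0 \<le> (\<Sum>u\<in>S j. \<Sum>v\<in>S j. \<Sum>i<n. p u i * lam i * p v i)"
  shows "real m * (\<Sum>i<k. lam i) \<le> (\<Sum>j<k. \<Sum>u\<in>S j. \<Sum>v\<in>S j. \<Sum>i<n. p u i * lam i * p v i)"
proof -
  define Q where "Q j = (\<Sum>u\<in>S j. \<Sum>v\<in>S j. \<Sum>i<n. p u i * lam i * p v i)" for j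
  define y where "y j i = (\<Sum>u\<in>S j. p u i)" for j i
  define cd where "cd j = real (card (S j))" for j
  have fin: "\<And>j. j < k \<Longrightarrow> finite (S j)" using sub finite_subset by blast
  have cdpos: "\<And>j. j < k \<Longrightarrow> cd j > 0" unfolding cd_def using card m by (metis of_nat_0_less_iff le_trans less_one not_le)
  have Qy: "\<And>j. Q j = (\<Sum>i<n. lam i * (y j i)^2)"
    unfolding Q_def y_def power2_eq_square sum_distrib_left sum_distrib_right
    by (subst sum.swap, rule sum.cong, simp, subst sum.swap, rule sum.cong, simp, rule sum.cong, auto simp: algebra_simps)
  have ysq: "\<And>j. j < k \<Longrightarrow> (\<Sum>i<n. (y j i)^2) = cd j"
  proof -
    fix j assume j: "j < k"
    have "(\<Sum>i<n. (y j i)^2) = (\<Sum>u\<in>S j. \<Sum>v\<in>S j. \<Sum>i<n. p u i * p v i)"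
      unfolding y_def power2_eq_square sum_distrib_left sum_distrib_right
      by (subst sum.swap, rule sum.cong, simp, subst sum.swap, rule sum.cong, auto simp: algebra_simps)
    also have "\<dots> = (\<Sum>u\<in>S j. \<Sum>v\<in>S j. (if u = v then 1 else 0))"
      using sub[OF j] by (intro sum.cong refl) (auto simp: orth2[rule_format] subset_iff)
    also have "\<dots> = cd j" unfolding cd_def using fin[OF j] by simp
    finally show "(\<Sum>i<n. (y j i)^2) = cd j" .
  qed
  define c where "c i = (\<Sum>j<k. (y j i)^2 / cd j)" for i
  have c0: "\<And>i. 0 \<le> c i" unfolding c_def using cdpos by (intro sum_nonneg) (simp add: less_imp_le)
  have c1: "\<And>i. i < n \<Longrightarrow> c i \<le> 1"
  proof -
    fix i assume i: "i < n"
    have "c i \<le> (\<Sum>j<k. \<Sum>u\<in>S j. (p u i)^2)"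
      unfolding c_def
    proof (rule sum_mono)
      fix j assume "j \<in> {..<k}"
      hence j: "j < k" by simp
      have "(y j i)^2 \<le> cd j * (\<Sum>u\<in>S j. (p u i)^2)"
        unfolding y_def cd_def by (rule cauchy_sum[OF fin[OF j]])
      thus "(y j i)^2 / cd j \<le> (\<Sum>u\<in>S j. (p u i)^2)" using cdpos[OF j]
        by (simp add: divide_le_eq mult.commute)
    qed
    also have "\<dots> = (\<Sum>u\<in>(\<Union>j<k. S j). (p u i)^2)"
      by (rule sum.UNION_disjoint[symmetric], auto simp: fin disj)
    also have "\<dots> = 1" unfolding cover using orth1 i by (simp add: power2_eq_square)
    finally show "c i \<le> 1" .
  qed
  have csum: "(\<Sum>i<n. c i) = real k"
  proof -
    have "(\<Sum>i<n. c i) = (\<Sum>j<k. (\<Sum>i<n. (y j i)^2) / cd j)"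
      unfolding c_def by (subst sum.swap) (simp add: sum_divide_distrib)
    also have "\<dots> = (\<Sum>j<k. 1)" using ysq cdpos by (intro sum.cong refl) (simp add: less_imp_neq[symmetric])
    finally show ?thesis by simp
  qed
  have "(\<Sum>i<k. lam i) \<le> (\<Sum>i<n. lam i * c i)"
    by (rule rearrange[OF sorted c0 c1 csum k], auto)
  also have "(\<Sum>i<n. lam i * c i) = (\<Sum>j<k. Q j / cd j)"
    unfolding c_def Qy sum_distrib_left sum_divide_distrib
    by (subst sum.swap) (simp add: algebra_simps)
  finally have "real m * (\<Sum>i<k. lam i) \<le> real m * (\<Sum>j<k. Q j / cd j)"
    by (simp add: mult_left_mono)
  also have "\<dots> = (\<Sum>j<k. real m * Q j / cd j)" by (simp add: sum_distrib_left)
  also have "\<dots> \<le> (\<Sum>j<k. Q j)"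
  proof (rule sum_mono)
    fix j assume "j \<in> {..<k}"
    hence j: "j < k" by simp
    have "real m * Q j \<le> cd j * Q j" using card[OF j] Qnn[OF j] unfolding cd_def Q_def
      by (simp add: mult_right_mono)
    thus "real m * Q j / cd j \<le> Q j" using cdpos[OF j] by (simp add: divide_le_eq mult.commute)
  qed
  finally show ?thesis unfolding Q_def .
qed



lemma run_append: "run n E M (xs @ ys) s = (case run n E M xs s of None \<Rightarrow> None | Some s' \<Rightarrow> run n E M ys s')"
proof (induction xs arbitrary: s)
  case (Cons x xs)
  show ?case by (cases "step n E M x s") (auto simp: Cons)
qed simp

lemma step_props:
  assumes "step n E M m (R, B, C) = Some (R', B', C')"
  shows "\<And>v. v \<in> R' \<Longrightarrow> v \<notin> R \<Longrightarrow> m = Load v \<or> m = Compute v"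
    and "\<And>v. v \<in> B' \<Longrightarrow> v \<notin> B \<Longrightarrow> m = Store v"
    and "C' = (case m of Compute v \<Rightarrow> insert v C | _ \<Rightarrow> C)"
    and "finite R \<Longrightarrow> card R \<le> M \<Longrightarrow> finite R' \<and> card R' \<le> M"
    and "R \<subseteq> C \<Longrightarrow> B \<subseteq> C \<Longrightarrow> R' \<subseteq> C' \<and> B' \<subseteq> C'"
    and "\<And>v. m = Compute v \<Longrightarrow> v \<notin> C \<and> v < n \<and> (\<forall>u. (u, v) \<in> E \<longrightarrow> u \<in> R)"
    and "\<And>v. m = Load v \<Longrightarrow> v \<in> B"
  using assms
  by (cases m; auto split: if_splits intro: card_Diff1_le[THEN le_trans])+

definition isL :: "move \<Rightarrow> bool" where "isL m = (\<exists>u. m = Load u)"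
definition isS :: "move \<Rightarrow> bool" where "isS m = (\<exists>u. m = Store u)"

lemma is_io_LS: "is_io m = (isL m \<or> isS m)"
  by (cases m) (auto simp: isL_def isS_def)

locale evalrun =
  fixes n :: nat and E :: "nat rel" and M :: nat and ms :: "move list" and k :: nat
  assumes Esub: "E \<subseteq> {0..<n} \<times> {0..<n}"
    and valid: "valid_evaluation n E M ms"
    and k1: "1 \<le> k" and kn: "k \<le> n"
begin

abbreviation "T \<equiv> length ms"

definition st :: "nat \<Rightarrow> state" where
  "st t = the (run n E M (take t ms) ({}, {}, {}))"

definition "Rs t = fst (st t)"
definition "Bs t = fst (snd (st t))"
definition "Cs t = snd (snd (st t))"

lemma st_decomp: "st t = (Rs t, Bs t, Cs t)"
  by (simp add: Rs_def Bs_def Cs_def)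

lemma run_take: assumes "t \<le> T" shows "run n E M (take t ms) ({}, {}, {}) = Some (st t)"
proof -
  from valid obtain R B where fin: "run n E M ms ({}, {}, {}) = Some (R, B, {0..<n})"
    unfolding valid_evaluation_def by auto
  have "run n E M (take t ms @ drop t ms) ({}, {}, {}) = Some (R, B, {0..<n})" using fin by simp
  hence "run n E M (take t ms @ drop t ms) ({}, {}, {}) \<noteq> None" by simp
  thus ?thesis unfolding run_append st_def by (cases "run n E M (take t ms) ({}, {}, {})") auto
qed

lemma st_step: assumes "t < T" shows "step n E M (ms ! t) (st t) = Some (st (Suc t))"
proof -
  have "take (Suc t) ms = take t ms @ [ms ! t]" using assms by (simp add: take_Suc_conv_app_nth)
  hence "run n E M (take (Suc t) ms) ({}, {}, {}) = (case step n E M (ms ! t) (st t) of None \<Rightarrow> None | Some s' \<Rightarrow> Some s')"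
    using run_take[of t] assms by (simp add: run_append split: option.split)
  thus ?thesis using run_take[of "Suc t"] assms by (cases "step n E M (ms ! t) (st t)") auto
qed

lemma step_t: assumes "t < T" shows "step n E M (ms ! t) (Rs t, Bs t, Cs t) = Some (Rs (Suc t), Bs (Suc t), Cs (Suc t))"
  using st_step[OF assms] by (simp add: st_decomp)

lemma st0': "st 0 = ({}, {}, {})" using run_take[of 0] by simp
lemma st0: "Rs 0 = {}" "Bs 0 = {}" "Cs 0 = {}"
  by (auto simp: Rs_def Bs_def Cs_def st0')

lemma CsT: "Cs T = {0..<n}"
proof -
  from valid obtain R B where fin: "run n E M ms ({}, {}, {}) = Some (R, B, {0..<n})"
    unfolding valid_evaluation_def by auto
  hence "st T = (R, B, {0..<n})" using run_take[of T] by simp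
  thus ?thesis by (simp add: Cs_def)
qed

lemma inv: "t \<le> T \<Longrightarrow> finite (Rs t) \<and> card (Rs t) \<le> M \<and> Rs t \<subseteq> Cs t \<and> Bs t \<subseteq> Cs t"
proof (induction t)
  case 0 thus ?case by (simp add: st0)
next
  case (Suc t)
  hence IH: "finite (Rs t)" "card (Rs t) \<le> M" "Rs t \<subseteq> Cs t" "Bs t \<subseteq> Cs t" by auto
  note s = step_t[of t] 
  show ?case using step_props(4)[OF s IH(1,2)] step_props(5)[OF s IH(3,4)] Suc(2) by auto
qed

lemma Cs_char: "t \<le> T \<Longrightarrow> Cs t = {v. \<exists>\<tau><t. ms ! \<tau> = Compute v}"
proof (induction t)
  case 0 thus ?case by (simp add: st0)
next
  case (Suc t)
  have C: "Cs (Suc t) = (case ms ! t of Compute v \<Rightarrow> insert v (Cs t) | _ \<Rightarrow> Cs t)"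
    using step_props(3)[OF step_t[of t]] Suc(2) by auto
  show ?case unfolding C using Suc
    by (cases "ms ! t") (auto simp: less_Suc_eq)
qed

lemma compute_unique:
  assumes "t1 < T" "t2 < T" "ms ! t1 = Compute v" "ms ! t2 = Compute v"
  shows "t1 = t2"
proof (rule ccontr)
  assume "t1 \<noteq> t2"
  then consider "t1 < t2" | "t2 < t1" by linarith
  thus False
  proof cases
    case 1
    hence "v \<in> Cs t2" using Cs_char[of t2] assms by auto
    thus False using step_props(6)[OF step_t[of t2]] assms by auto
  next
    case 2
    hence "v \<in> Cs t1" using Cs_char[of t1] assms by auto
    thus False using step_props(6)[OF step_t[of t1]] assms by auto
  qed
qed

lemma R_gain:
  assumes "t \<le> t'" "t' \<le> T" "v \<notin> Rs t" "v \<in> Rs t'"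
  shows "\<exists>\<tau>. t \<le> \<tau> \<and> \<tau> < t' \<and> (ms ! \<tau> = Load v \<or> ms ! \<tau> = Compute v)"
  using assms
proof (induction t' rule: dec_induct)
  case base thus ?case by simp
next
  case (step t'')
  show ?case
  proof (cases "v \<in> Rs t''")
    case True
    with step show ?thesis by (metis Suc_leD less_SucI)
  next
    case False
    with step_props(1)[OF step_t[of t'']] step show ?thesis by force
  qed
qed

lemma B_gain: "t \<le> T \<Longrightarrow> v \<in> Bs t \<Longrightarrow> \<exists>\<tau><t. ms ! \<tau> = Store v"
proof (induction t)
  case 0 thus ?case by (simp add: st0)
next
  case (Suc t)
  show ?case
  proof (cases "v \<in> Bs t")
    case True
    then obtain \<tau> where "\<tau> < t" "ms ! \<tau> = Store v" using Suc by auto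
    thus ?thesis using less_SucI by blast
  next
    case False with step_props(2)[OF step_t[of t]] Suc show ?thesis by force
  qed
qed

definition ct :: "nat \<Rightarrow> nat" where "ct v = (THE \<tau>. \<tau> < T \<and> ms ! \<tau> = Compute v)"

lemma ct_prop: assumes "v < n" shows "ct v < T \<and> ms ! ct v = Compute v"
proof -
  have "v \<in> Cs T" using CsT assms by simp
  then obtain \<tau> where \<tau>: "\<tau> < T" "ms ! \<tau> = Compute v" using Cs_char[of T] by auto
  have "\<exists>!\<tau>. \<tau> < T \<and> ms ! \<tau> = Compute v" using \<tau> compute_unique by blast
  thus ?thesis unfolding ct_def by (rule theI')
qed

lemma ct_eq: assumes "\<tau> < T" "ms ! \<tau> = Compute v" shows "v < n \<and> ct v = \<tau>"
proof -
  have v: "v < n" using step_props(6)[OF step_t[of \<tau>]] assms by auto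
  thus ?thesis using ct_prop[OF v] compute_unique assms by blast
qed

lemma ct_inj: "u < n \<Longrightarrow> v < n \<Longrightarrow> ct u = ct v \<Longrightarrow> u = v"
  using ct_prop by (metis move.inject(4))

lemma edge_n: "(u, v) \<in> E \<Longrightarrow> u < n \<and> v < n"
  using Esub by auto

lemma parent_R: "(u, v) \<in> E \<Longrightarrow> u \<in> Rs (ct v)"
  using step_props(6)[OF step_t[of "ct v"]] ct_prop edge_n by blast

lemma edge_ct: assumes "(u, v) \<in> E" shows "ct u < ct v"
proof -
  have v: "v < n" using edge_n assms by auto
  have "u \<in> Cs (ct v)" using parent_R[OF assms] inv[of "ct v"] ct_prop[OF v] by auto
  then obtain \<tau> where "\<tau> < ct v" "ms ! \<tau> = Compute u" using Cs_char[of "ct v"] ct_prop[OF v] by auto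
  thus ?thesis using ct_eq[of \<tau> u] ct_prop[OF v] by auto
qed


definition pos :: "nat \<Rightarrow> nat" where "pos v = card {w\<in>{..<n}. ct w < ct v}"

lemma pos_lt: assumes "u < n" "v < n" "ct u < ct v" shows "pos u < pos v"
  unfolding pos_def
proof (rule psubset_card_mono)
  show "finite {w \<in> {..<n}. ct w < ct v}" by simp
  show "{w \<in> {..<n}. ct w < ct u} \<subset> {w \<in> {..<n}. ct w < ct v}"
    using assms by auto
qed

lemma pos_less_iff: assumes "u < n" "v < n" shows "pos u < pos v \<longleftrightarrow> ct u < ct v"
proof
  assume "pos u < pos v"
  show "ct u < ct v"
  proof (rule ccontr)
    assume "\<not> ct u < ct v"
    hence "ct v < ct u \<or> ct v = ct u" by auto
    thus False using pos_lt[of v u] assms ct_inj[of u v] \<open>pos u < pos v\<close> by auto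
  qed
qed (rule pos_lt[OF assms])

lemma pos_range: assumes "v < n" shows "pos v < n"
proof -
  have "{w\<in>{..<n}. ct w < ct v} \<subseteq> {..<n} - {v}" by auto
  hence "pos v \<le> card ({..<n} - {v})" unfolding pos_def by (intro card_mono) auto
  thus ?thesis using assms by simp
qed

lemma pos_inj: "inj_on pos {..<n}"
proof (rule inj_onI)
  fix u v assume "u \<in> {..<n}" "v \<in> {..<n}" "pos u = pos v"
  hence u: "u < n" and v: "v < n" and e: "pos u = pos v" by auto
  have "\<not> ct u < ct v" using pos_less_iff[OF u v] e by simp
  moreover have "\<not> ct v < ct u" using pos_less_iff[OF v u] e by simp
  ultimately have "ct u = ct v" by simp
  thus "u = v" using ct_inj[OF u v] by simp
qed

lemma pos_img: "pos ` {..<n} = {..<n}"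
proof -
  have "pos ` {..<n} \<subseteq> {..<n}" using pos_range by auto
  moreover have "card (pos ` {..<n}) = card {..<n::nat}" using card_image[OF pos_inj] by simp
  ultimately show ?thesis by (intro card_subset_eq) auto
qed

definition vat :: "nat \<Rightarrow> nat" where "vat q = inv_into {..<n} pos q"

lemma vat: assumes "q < n" shows "vat q < n" "pos (vat q) = q"
proof -
  have q: "q \<in> pos ` {..<n}" using pos_img assms by auto
  show "vat q < n" unfolding vat_def using inv_into_into[OF q] by simp
  show "pos (vat q) = q" unfolding vat_def using f_inv_into_f[OF q] by simp
qed

definition "m = n div k"

lemma m1: "1 \<le> m" and km: "k * m \<le> n"
proof -
  show "k * m \<le> n" unfolding m_def by simp
  show "1 \<le> m" unfolding m_def using div_greater_zero_iff[of n k] k1 kn by simp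
qed

definition seg :: "nat \<Rightarrow> nat" where "seg v = min (pos v div m) (k - 1)"

definition S :: "nat \<Rightarrow> nat set" where "S j = {v\<in>{..<n}. seg v = j}"

lemma seg_lt: "seg v < k" unfolding seg_def using k1 by auto

lemma seg_ge: "seg v = j \<Longrightarrow> j * m \<le> pos v"
proof -
  assume "seg v = j"
  hence "j \<le> pos v div m" unfolding seg_def by linarith
  thus ?thesis using m1 by (simp add: less_eq_div_iff_mult_less_eq)
qed

lemma seg_gt: "j < seg v \<Longrightarrow> Suc j * m \<le> pos v"
proof -
  assume "j < seg v"
  hence "Suc j \<le> pos v div m" unfolding seg_def by simp
  thus ?thesis using m1 by (simp add: less_eq_div_iff_mult_less_eq)
qed

lemma seg_lt2: "seg v < j \<Longrightarrow> j < k \<Longrightarrow> pos v < j * m"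
proof -
  assume "seg v < j" "j < k"
  hence "pos v div m < j" unfolding seg_def by simp
  thus ?thesis using m1 by (simp add: div_less_iff_less_mult)
qed

lemma seg_le2: "seg v = j \<Longrightarrow> j < k - 1 \<Longrightarrow> pos v < Suc j * m"
proof -
  assume "seg v = j" "j < k - 1"
  hence "pos v div m = j" unfolding seg_def by (simp add: min_def split: if_splits)
  thus ?thesis using m1 div_less_iff_less_mult[of m "pos v" "Suc j"] by simp
qed

lemma seg_mono: "pos u \<le> pos v \<Longrightarrow> seg u \<le> seg v"
  unfolding seg_def using div_le_mono[of "pos u" "pos v" m] by linarith

lemma S_sub: "S j \<subseteq> {..<n}" unfolding S_def by auto

lemma S_disj: "j \<noteq> j' \<Longrightarrow> S j \<inter> S j' = {}" unfolding S_def by auto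

lemma S_cover: "(\<Union>j<k. S j) = {..<n}" unfolding S_def using seg_lt by auto

lemma S_card: assumes j: "j < k" shows "m \<le> card (S j)"
proof -
  have sub: "{j * m..<Suc j * m} \<subseteq> pos ` S j"
  proof
    fix q assume q: "q \<in> {j * m..<Suc j * m}"
    have "Suc j * m \<le> k * m" using j by (intro mult_le_mono1) simp
    hence qn: "q < n" using q km by auto
    have "j \<le> q div m" using q m1 by (simp add: less_eq_div_iff_mult_less_eq)
    moreover have "q div m < Suc j" using q m1 by (simp add: div_less_iff_less_mult)
    ultimately have "q div m = j" by simp
    hence "seg (vat q) = j" unfolding seg_def using vat[OF qn] j by simp
    hence "vat q \<in> S j" unfolding S_def using vat[OF qn] by simp
    thus "q \<in> pos ` S j" using vat[OF qn] by force
  qed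
  have "m = card {j * m..<Suc j * m}" by simp
  also have "\<dots> \<le> card (pos ` S j)" by (rule card_mono[OF _ sub]) (simp add: S_def)
  also have "\<dots> \<le> card (S j)" by (rule card_image_le) (simp add: S_def)
  finally show ?thesis .
qed

definition "Out = {u\<in>{..<n}. \<exists>v. (u, v) \<in> E \<and> seg v \<noteq> seg u}"
definition "Stored = {u. \<exists>t<T. ms ! t = Store u}"
definition "tau j = Suc (ct (vat (Suc j * m - 1)))"

lemma tau_le: assumes "j < k" shows "tau j \<le> T"
proof -
  have "Suc j * m \<le> k * m" using assms by (intro mult_le_mono1) simp
  moreover have "1 \<le> Suc j * m" using m1 by simp
  ultimately have "Suc j * m - 1 < n" using km by linarith
  thus ?thesis unfolding tau_def using ct_prop[OF vat(1)] by (simp add: Suc_leI)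
qed

lemma Out_sub: "Out \<subseteq> Stored \<union> (\<Union>j<k. Rs (tau j))"
proof
  fix u assume "u \<in> Out"
  then obtain v where u: "u < n" and uv: "(u, v) \<in> E" and sv: "seg v \<noteq> seg u" unfolding Out_def by auto
  have v: "v < n" using edge_n[OF uv] by simp
  have ctuv: "ct u < ct v" by (rule edge_ct[OF uv])
  have "pos u < pos v" using pos_lt[OF u v ctuv] .
  hence "seg u \<le> seg v" by (intro seg_mono) simp
  with sv have suv: "seg u < seg v" by simp
  define j where "j = seg u"
  have jk1: "j < k - 1" using suv seg_lt[of v] unfolding j_def by simp
  hence jk: "j < k" by simp
  define q where "q = Suc j * m - 1"
  have "Suc j * m \<le> k * m" using jk by (intro mult_le_mono1) simp
  moreover have "1 \<le> Suc j * m" using m1 by simp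
  ultimately have qn: "q < n" unfolding q_def using km by linarith
  define x where "x = vat q"
  have x: "x < n" "pos x = q" unfolding x_def using vat[OF qn] by auto
  have "pos u < Suc j * m" using seg_le2[OF j_def[symmetric] jk1] .
  hence "\<not> pos x < pos u" using x(2) unfolding q_def by simp
  hence cux: "ct u \<le> ct x" using pos_less_iff[OF x(1) u] by simp
  have "Suc j * m \<le> pos v" using seg_gt[of j v] suv unfolding j_def by simp
  hence "pos x < pos v" using x(2) m1 unfolding q_def by simp
  hence cxv: "ct x < ct v" using pos_less_iff[OF x(1) v] by simp
  have tauj: "tau j = Suc (ct x)" unfolding tau_def x_def q_def ..
  have ctv: "ct v < T" using ct_prop[OF v] by simp
  show "u \<in> Stored \<union> (\<Union>j<k. Rs (tau j))"
  proof (cases "u \<in> Rs (tau j)")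
    case True thus ?thesis using jk by auto
  next
    case False
    have "u \<in> Rs (ct v)" by (rule parent_R[OF uv])
    from R_gain[OF _ _ False this] tauj cxv ctv obtain \<tau> where
      \<tau>: "tau j \<le> \<tau>" "\<tau> < ct v" and mv: "ms ! \<tau> = Load u \<or> ms ! \<tau> = Compute u" by auto
    have \<tau>T: "\<tau> < T" using \<tau> ctv by simp
    show ?thesis
    proof (cases "ms ! \<tau> = Compute u")
      case True
      hence "ct u = \<tau>" using ct_eq[OF \<tau>T] by simp
      thus ?thesis using \<tau> tauj cux by simp
    next
      case False
      hence "ms ! \<tau> = Load u" using mv by simp
      hence "u \<in> Bs \<tau>" using step_props(7)[OF step_t[OF \<tau>T]] by simp
      then obtain \<tau>' where "\<tau>' < \<tau>" "ms ! \<tau>' = Store u" using B_gain[of \<tau> u] \<tau>T by auto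
      hence "u \<in> Stored" unfolding Stored_def using \<tau>T by (intro CollectI exI[of _ \<tau>']) simp
      thus ?thesis by simp
    qed
  qed
qed

definition "sv t = (case ms ! t of Store u \<Rightarrow> u | _ \<Rightarrow> 0)"
definition "lv t = (case ms ! t of Load u \<Rightarrow> u | _ \<Rightarrow> 0)"

lemma card_Stored: "finite Stored \<and> card Stored \<le> card {t. t < T \<and> isS (ms ! t)}"
proof -
  have "Stored \<subseteq> sv ` {t. t < T \<and> isS (ms ! t)}"
  proof
    fix u assume "u \<in> Stored"
    then obtain t where "t < T" "ms ! t = Store u" unfolding Stored_def by auto
    thus "u \<in> sv ` {t. t < T \<and> isS (ms ! t)}" unfolding sv_def isS_def by force
  qed
  moreover have fi: "finite (sv ` {t. t < T \<and> isS (ms ! t)})" by simp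
  ultimately have "finite Stored" "card Stored \<le> card (sv ` {t. t < T \<and> isS (ms ! t)})"
    by (auto intro: finite_subset card_mono)
  moreover have "card (sv ` {t. t < T \<and> isS (ms ! t)}) \<le> card {t. t < T \<and> isS (ms ! t)}"
    by (rule card_image_le) simp
  ultimately show ?thesis by simp
qed

lemma card_Out: "card Out \<le> card {t. t < T \<and> isS (ms ! t)} + k * M"
proof -
  have fin: "\<And>j. j < k \<Longrightarrow> finite (Rs (tau j)) \<and> card (Rs (tau j)) \<le> M"
    using inv tau_le by blast
  have finU: "finite (\<Union>j<k. Rs (tau j))" using fin by auto
  have "card Out \<le> card (Stored \<union> (\<Union>j<k. Rs (tau j)))"
    by (rule card_mono[OF _ Out_sub]) (use card_Stored finU in auto)
  also have "\<dots> \<le> card Stored + card (\<Union>j<k. Rs (tau j))" by (rule card_Un_le)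
  also have "card (\<Union>j<k. Rs (tau j)) \<le> (\<Sum>j<k. card (Rs (tau j)))" by (rule card_UN_le) simp
  also have "\<dots> \<le> (\<Sum>j<k. M)" by (rule sum_mono) (use fin in auto)
  finally show ?thesis using card_Stored by simp
qed

definition "sig j = (if j < k then ct (vat (j * m)) else T)"
definition "LT j = {\<tau>. sig j \<le> \<tau> \<and> \<tau> < sig (Suc j) \<and> isL (ms ! \<tau>)}"
definition "In j = {v\<in>{..<n} - S j. \<exists>u\<in>S j. (v, u) \<in> E}"

lemma jm_lt: "j < k \<Longrightarrow> j * m < n"
proof -
  assume "j < k"
  hence "j * m < k * m" using m1 by (intro mult_less_mono1) auto
  thus ?thesis using km by linarith
qed

lemma sig_le: "sig j \<le> T"
  unfolding sig_def using ct_prop[OF vat(1)[OF jm_lt]] by (auto intro: less_imp_le)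

lemma sig_step: "sig j \<le> sig (Suc j)"
proof (cases "Suc j < k")
  case True
  have a: "j * m < n" "Suc j * m < n" using jm_lt[of j] jm_lt[of "Suc j"] True by auto
  have "pos (vat (j * m)) < pos (vat (Suc j * m))" using vat(2) a m1 by simp
  hence "ct (vat (j * m)) < ct (vat (Suc j * m))" using pos_less_iff vat(1) a by blast
  thus ?thesis unfolding sig_def using True by simp
next
  case False thus ?thesis using sig_le[of j] unfolding sig_def by auto
qed

lemma sig_mono: "j \<le> j' \<Longrightarrow> sig j \<le> sig j'"
  by (rule lift_Suc_mono_le[of sig, OF sig_step])

lemma In_sub: assumes jk: "j < k" shows "In j \<subseteq> Rs (sig j) \<union> lv ` LT j"
proof
  fix v assume "v \<in> In j"
  then obtain u where v: "v < n" "v \<notin> S j" and u: "u \<in> S j" and vu: "(v, u) \<in> E" unfolding In_def by auto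
  have u': "u < n" "seg u = j" using u unfolding S_def by auto
  have svj: "seg v \<noteq> j" using v unfolding S_def by auto
  have ctvu: "ct v < ct u" by (rule edge_ct[OF vu])
  have "pos v < pos u" using pos_lt[OF v(1) u'(1) ctvu] .
  hence "seg v \<le> seg u" by (intro seg_mono) simp
  hence svj': "seg v < j" using svj u' by simp
  have pv: "pos v < j * m" by (rule seg_lt2[OF svj' jk])
  have pu: "j * m \<le> pos u" by (rule seg_ge[OF u'(2)])
  define y where "y = vat (j * m)"
  have y: "y < n" "pos y = j * m" unfolding y_def using vat jm_lt[OF jk] by auto
  have ctvy: "ct v < ct y" using pos_less_iff[OF v(1) y(1)] pv y by simp
  have ctyu: "ct y \<le> ct u" using pos_less_iff[OF u'(1) y(1)] pu y by simp
  have sigj: "sig j = ct y" unfolding sig_def y_def using jk by simp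
  have ctu_sig: "ct u < sig (Suc j)"
  proof (cases "Suc j < k")
    case True
    have a: "Suc j * m < n" using jm_lt[of "Suc j"] True by blast
    have "pos u < Suc j * m" using seg_le2[OF u'(2)] True by simp
    hence "pos u < pos (vat (Suc j * m))" using vat(2)[OF a] by simp
    hence "ct u < ct (vat (Suc j * m))" using pos_less_iff[OF u'(1) vat(1)[OF a]] by simp
    thus ?thesis unfolding sig_def using True by simp
  next
    case False thus ?thesis unfolding sig_def using ct_prop[OF u'(1)] by simp
  qed
  show "v \<in> Rs (sig j) \<union> lv ` LT j"
  proof (cases "v \<in> Rs (sig j)")
    case True thus ?thesis by simp
  next
    case False
    have "v \<in> Rs (ct u)" by (rule parent_R[OF vu])
    from R_gain[OF _ _ False this] sigj ctyu ct_prop[OF u'(1)] obtain \<tau> where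
      \<tau>: "sig j \<le> \<tau>" "\<tau> < ct u" and mv: "ms ! \<tau> = Load v \<or> ms ! \<tau> = Compute v" by auto
    have \<tau>T: "\<tau> < T" using \<tau> ct_prop[OF u'(1)] by simp
    show ?thesis
    proof (cases "ms ! \<tau> = Compute v")
      case True
      hence "ct v = \<tau>" using ct_eq[OF \<tau>T] by simp
      thus ?thesis using \<tau> sigj ctvy by simp
    next
      case False
      hence L: "ms ! \<tau> = Load v" using mv by simp
      hence "\<tau> \<in> LT j" unfolding LT_def isL_def using \<tau> ctu_sig by auto
      moreover have "lv \<tau> = v" unfolding lv_def L by simp
      ultimately show ?thesis by force
    qed
  qed
qed

lemma LT_disj: assumes "i < j" shows "LT i \<inter> LT j = {}"
proof -
  have "sig (Suc i) \<le> sig j" using assms by (intro sig_mono) simp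
  thus ?thesis unfolding LT_def by auto
qed

lemma card_In: "(\<Sum>j<k. card (In j)) \<le> card {t. t < T \<and> isL (ms ! t)} + k * M"
proof -
  have finLT: "\<And>j. finite (LT j)"
    unfolding LT_def by (rule finite_subset[of _ "{..<T}"]) (use sig_le in \<open>auto intro: less_le_trans\<close>)
  have "(\<Sum>j<k. card (In j)) \<le> (\<Sum>j<k. M + card (LT j))"
  proof (rule sum_mono)
    fix j assume "j \<in> {..<k}"
    hence jk: "j < k" by simp
    have R: "finite (Rs (sig j)) \<and> card (Rs (sig j)) \<le> M" using inv[OF sig_le] by blast
    have "card (In j) \<le> card (Rs (sig j) \<union> lv ` LT j)"
      by (rule card_mono[OF _ In_sub[OF jk]]) (use R finLT in auto)
    also have "\<dots> \<le> card (Rs (sig j)) + card (lv ` LT j)" by (rule card_Un_le)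
    also have "card (lv ` LT j) \<le> card (LT j)" by (rule card_image_le[OF finLT])
    finally show "card (In j) \<le> M + card (LT j)" using R by linarith
  qed
  also have "\<dots> = k * M + (\<Sum>j<k. card (LT j))" by (simp add: sum.distrib)
  also have "(\<Sum>j<k. card (LT j)) = card (\<Union>j<k. LT j)"
  proof (rule card_UN_disjoint[symmetric])
    show "finite {..<k}" by simp
    show "\<forall>i\<in>{..<k}. finite (LT i)" using finLT by simp
    show "\<forall>i\<in>{..<k}. \<forall>j\<in>{..<k}. i \<noteq> j \<longrightarrow> LT i \<inter> LT j = {}"
    proof (intro ballI impI)
      fix i j :: nat assume "i \<noteq> j"
      hence "i < j \<or> j < i" by linarith
      thus "LT i \<inter> LT j = {}" using LT_disj[of i j] LT_disj[of j i] by blast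
    qed
  qed
  also have "card (\<Union>j<k. LT j) \<le> card {t. t < T \<and> isL (ms ! t)}"
    by (rule card_mono) (use sig_le in \<open>auto simp: LT_def intro: less_le_trans\<close>)
  finally show ?thesis by simp
qed

end



lemma wadj_nonneg: "0 \<le> wadj E u v" unfolding wadj_def by simp

lemma wadj_sym: "wadj E u v = wadj E v u" unfolding wadj_def by simp

lemma frac_le:
  assumes fe: "finite {y. (x, y) \<in> E}" and fV: "finite V"
  shows "(\<Sum>y\<in>V. (if (x, y) \<in> E then 1 / real (dout E x) else 0)) \<le> (if \<exists>y\<in>V. (x, y) \<in> E then 1 else 0)"
proof -
  have eq: "(\<Sum>y\<in>V. (if (x, y) \<in> E then 1 / real (dout E x) else 0)) = real (card {y\<in>V. (x, y) \<in> E}) / real (dout E x)"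
    using sum.inter_filter[OF fV, of "\<lambda>_. 1 / real (dout E x)" "\<lambda>y. (x, y) \<in> E", symmetric] by simp
  show ?thesis
  proof (cases "\<exists>y\<in>V. (x, y) \<in> E")
    case False
    hence e: "{y\<in>V. (x, y) \<in> E} = {}" by auto
    show ?thesis unfolding eq e using False by simp
  next
    case True
    then obtain y where "(x, y) \<in> E" by auto
    hence "card {y. (x, y) \<in> E} > 0" using fe by (auto simp: card_gt_0_iff)
    hence d: "real (dout E x) > 0" unfolding dout_def by simp
    have "card {y\<in>V. (x, y) \<in> E} \<le> dout E x" unfolding dout_def by (rule card_mono[OF fe]) auto
    hence "real (card {y\<in>V. (x, y) \<in> E}) / real (dout E x) \<le> 1" using d by (simp add: divide_le_eq)
    thus ?thesis unfolding eq using True by simp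
  qed
qed

lemma sum_ind_card: "finite A \<Longrightarrow> (\<Sum>x\<in>A. (if P x then 1 else 0 :: real)) = real (card {x\<in>A. P x})"
  using sum.inter_filter[of A "\<lambda>_. 1 :: real" P] by simp

context evalrun
begin

lemma fin_out: "finite {y. (x, y) \<in> E}"
  by (rule finite_subset[of _ "{0..<n}"]) (use Esub in auto)

lemma io_split: "real (io_cost ms) = real (card {t. t < T \<and> isL (ms ! t)}) + real (card {t. t < T \<and> isS (ms ! t)})"
proof -
  have "io_cost ms = card {t. t < T \<and> is_io (ms ! t)}" unfolding io_cost_def by (rule length_filter_conv_card)
  also have "{t. t < T \<and> is_io (ms ! t)} = {t. t < T \<and> isL (ms ! t)} \<union> {t. t < T \<and> isS (ms ! t)}"
    by (auto simp: is_io_LS)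
  also have "card \<dots> = card {t. t < T \<and> isL (ms ! t)} + card {t. t < T \<and> isS (ms ! t)}"
    by (rule card_Un_disjoint) (auto simp: isL_def isS_def)
  finally show ?thesis by simp
qed

lemma sum_over_S: "(\<Sum>j<k. \<Sum>u\<in>S j. f u) = (\<Sum>u<n. f u)"
proof -
  have "(\<Sum>u<n. f u) = (\<Sum>u\<in>(\<Union>j<k. S j). f u)" unfolding S_cover ..
  also have "\<dots> = (\<Sum>j<k. \<Sum>u\<in>S j. f u)"
    by (rule sum.UNION_disjoint) (auto intro: finite_subset[OF S_sub] simp: S_disj)
  finally show ?thesis by simp
qed

lemma cut_bound: "(\<Sum>j<k. \<Sum>u\<in>S j. \<Sum>v\<in>{..<n} - S j. wadj E u v) \<le> real (io_cost ms) + 2 * real k * real M"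
proof -
  define a where "a x y = (if (x, y) \<in> E then 1 / real (dout E x) else 0)" for x y
  have w: "\<And>u v. wadj E u v = a u v + a v u" unfolding a_def wadj_def by simp
  have finS: "\<And>j. finite (S j)" by (rule finite_subset[OF S_sub]) simp
  have "(\<Sum>j<k. \<Sum>u\<in>S j. \<Sum>v\<in>{..<n} - S j. wadj E u v)
      = (\<Sum>j<k. \<Sum>u\<in>S j. \<Sum>v\<in>{..<n} - S j. a u v) + (\<Sum>j<k. \<Sum>v\<in>{..<n} - S j. \<Sum>u\<in>S j. a v u)"
    unfolding w sum.distrib by (simp add: sum.swap[of _ "S _"])
  also have "(\<Sum>j<k. \<Sum>u\<in>S j. \<Sum>v\<in>{..<n} - S j. a u v) \<le> real (card Out)"
  proof -
    have "(\<Sum>j<k. \<Sum>u\<in>S j. \<Sum>v\<in>{..<n} - S j. a u v) \<le> (\<Sum>j<k. \<Sum>u\<in>S j. (if u \<in> Out then 1 else 0))"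
    proof (intro sum_mono)
      fix j u assume j: "j \<in> {..<k}" and u: "u \<in> S j"
      have "(\<Sum>v\<in>{..<n} - S j. a u v) \<le> (if \<exists>y\<in>{..<n} - S j. (u, y) \<in> E then 1 else 0)"
        unfolding a_def by (rule frac_le[OF fin_out]) simp
      also have "\<dots> \<le> (if u \<in> Out then 1 else 0)"
        using u unfolding Out_def S_def by auto
      finally show "(\<Sum>v\<in>{..<n} - S j. a u v) \<le> (if u \<in> Out then 1 else 0)" .
    qed
    also have "\<dots> = (\<Sum>u<n. (if u \<in> Out then 1 else 0))" by (rule sum_over_S)
    also have "\<dots> = real (card {u\<in>{..<n}. u \<in> Out})" by (rule sum_ind_card) simp
    also have "{u\<in>{..<n}. u \<in> Out} = Out" unfolding Out_def by auto
    finally show ?thesis .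
  qed
  also have "(\<Sum>j<k. \<Sum>v\<in>{..<n} - S j. \<Sum>u\<in>S j. a v u) \<le> (\<Sum>j<k. real (card (In j)))"
  proof (intro sum_mono)
    fix j assume j: "j \<in> {..<k}"
    have "(\<Sum>v\<in>{..<n} - S j. \<Sum>u\<in>S j. a v u) \<le> (\<Sum>v\<in>{..<n} - S j. (if \<exists>u\<in>S j. (v, u) \<in> E then 1 else 0))"
      unfolding a_def by (intro sum_mono frac_le[OF fin_out finS])
    also have "\<dots> = real (card (In j))" unfolding In_def by (rule sum_ind_card) simp
    finally show "(\<Sum>v\<in>{..<n} - S j. \<Sum>u\<in>S j. a v u) \<le> real (card (In j))" .
  qed
  also have "real (card Out) + (\<Sum>j<k. real (card (In j))) \<le> real (io_cost ms) + 2 * real k * real M"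
  proof -
    have "real (card Out) \<le> real (card {t. t < T \<and> isS (ms ! t)}) + real k * real M"
      using card_Out by (metis of_nat_add of_nat_le_iff of_nat_mult)
    moreover have "(\<Sum>j<k. real (card (In j))) \<le> real (card {t. t < T \<and> isL (ms ! t)}) + real k * real M"
      using card_In by (metis of_nat_add of_nat_le_iff of_nat_mult of_nat_sum)
    ultimately show ?thesis unfolding io_split by linarith
  qed
  finally show ?thesis by linarith
qed

end

lemma lap_carrier: "laplacian n E \<in> carrier_mat n n" unfolding laplacian_def by simp

lemma lap_sym: "transpose_mat (laplacian n E) = laplacian n E"
  by (rule eq_matI) (auto simp: laplacian_def wadj_sym)

lemma lap_quad:
  assumes S: "S \<subseteq> {..<n}"
  shows "(\<Sum>u\<in>S. \<Sum>v\<in>S. laplacian n E $$ (u, v)) = (\<Sum>u\<in>S. \<Sum>v\<in>{..<n} - S. wadj E u v)"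
proof (rule sum.cong[OF refl])
  fix u assume u: "u \<in> S"
  have fS: "finite S" using S finite_subset by blast
  have "(\<Sum>v\<in>S. laplacian n E $$ (u, v)) = (\<Sum>v\<in>S. (if u = v then wdeg n E u else 0) - wadj E u v)"
    using S u by (intro sum.cong refl) (auto simp: laplacian_def dest!: subsetD[OF S])
  also have "\<dots> = wdeg n E u - (\<Sum>v\<in>S. wadj E u v)"
    using u fS by (simp add: sum_subtractf)
  also have "wdeg n E u = (\<Sum>v\<in>S. wadj E u v) + (\<Sum>v\<in>{..<n} - S. wadj E u v)"
    unfolding wdeg_def using S by (metis add.commute finite_lessThan sum.subset_diff)
  finally show "(\<Sum>v\<in>S. laplacian n E $$ (u, v)) = (\<Sum>v\<in>{..<n} - S. wadj E u v)" by simp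
qed

theorem theorem4p4:
  fixes n M k :: nat and E :: "nat rel"
  assumes "E \<subseteq> {0..<n} \<times> {0..<n}"
    and "acyclic E"
    and "1 \<le> k" and "k \<le> n"
  shows "J_star n E M \<ge>
    ereal (real (n div k) * (\<Sum>i<k. sorted_eigenvalues (laplacian n E) ! i) - 2 * real k * real M)"
  unfolding J_star_def
proof (rule INF_greatest)
  fix ms assume "ms \<in> {ms. valid_evaluation n E M ms}"
  hence val: "valid_evaluation n E M ms" by simp
  interpret evalrun n E M ms k using assms val by unfold_locales auto
  let ?L = "laplacian n E"
  define es where "es = sorted_eigenvalues ?L"
  from sym_decomp[OF lap_carrier lap_sym, of n E, folded sorted_eigenvalues_def, folded es_def]
  obtain p where les: "length es = n" and ses: "sorted es"
    and o1: "\<forall>i<n. \<forall>j<n. (\<Sum>v<n. p v i * p v j) = (if i = j then 1 else 0)"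
    and o2: "\<forall>u<n. \<forall>v<n. (\<Sum>i<n. p u i * p v i) = (if u = v then 1 else 0)"
    and dec: "\<forall>u<n. \<forall>v<n. ?L $$ (u,v) = (\<Sum>i<n. p u i * es ! i * p v i)" by blast
  have Qeq: "\<And>j. (\<Sum>u\<in>S j. \<Sum>v\<in>S j. \<Sum>i<n. p u i * es ! i * p v i) = (\<Sum>u\<in>S j. \<Sum>v\<in>{..<n} - S j. wadj E u v)"
  proof -
    fix j
    have "(\<Sum>u\<in>S j. \<Sum>v\<in>S j. \<Sum>i<n. p u i * es ! i * p v i) = (\<Sum>u\<in>S j. \<Sum>v\<in>S j. ?L $$ (u,v))"
      using S_sub[of j] by (intro sum.cong refl) (auto simp: dec[rule_format] dest!: subsetD[OF S_sub[of j]])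
    also have "\<dots> = (\<Sum>u\<in>S j. \<Sum>v\<in>{..<n} - S j. wadj E u v)" by (rule lap_quad[OF S_sub])
    finally show "?thesis j" .
  qed
  have "real m * (\<Sum>i<k. es ! i) \<le> (\<Sum>j<k. \<Sum>u\<in>S j. \<Sum>v\<in>S j. \<Sum>i<n. p u i * es ! i * p v i)"
  proof (rule kyfan_partition[OF _ o1 o2 S_sub S_disj S_cover S_card m1 k1 kn])
    show "\<And>i j. i \<le> j \<Longrightarrow> j < n \<Longrightarrow> es ! i \<le> es ! j" using ses les by (simp add: sorted_nth_mono)
    show "\<And>j. j < k \<Longrightarrow> 0 \<le> (\<Sum>u\<in>S j. \<Sum>v\<in>S j. \<Sum>i<n. p u i * es ! i * p v i)"
      unfolding Qeq by (intro sum_nonneg wadj_nonneg)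
  qed
  also have "\<dots> \<le> real (io_cost ms) + 2 * real k * real M" unfolding Qeq by (rule cut_bound)
  finally have "real (n div k) * (\<Sum>i<k. es ! i) - 2 * real k * real M \<le> real (io_cost ms)"
    unfolding m_def by simp
  thus "ereal (real (n div k) * (\<Sum>i<k. sorted_eigenvalues ?L ! i) - 2 * real k * real M) \<le> ereal (real (io_cost ms))"
    unfolding es_def by simp
qed

end
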